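(* Consider the free abelian group $\mathbb Z\Delta$ on $\Delta=\{D_1,\dots,D_6\}$ and the elements $\sigma_1=D_1+D_2-D_3$, $\sigma_2=-D_1+D_2+D_3-D_4-D_6$, $\sigma_3=-D_2+D_3+D_4-D_5$, $\sigma_4=-D_3+D_4+D_5$, $\sigma_5=-D_5+D_6$, with $\Sigma=\{\sigma_1,\dots,\sigma_5\}$. Let $\gamma\in\mathbb N\Sigma$ be a covering difference in $\mathbb N\Delta$ with $\sigma_5\in\mathrm{supp}_\Sigma\gamma$. Then either $\gamma=\sigma_5=-D_5+D_6$ or $\gamma=\sigma_2+\sigma_4+\sigma_5=-D_1+D_2$. Moreover every other covering difference $\gamma\in\mathbb N\Sigma$ (i.e. different from these two) satisfies $\mathrm{ht}(\gamma^+)=2$.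
   Context: For $D,E\in\mathbb Z\Delta$ write $D\le_\Sigma E$ if $E-D\in\mathbb N\Sigma$, and $D<_\Sigma E$ if moreover $D\neq E$. For $E,F\in\mathbb N\Delta$ with $E<_\Sigma F$, say $F$ covers $E$ if there is no $G\in\mathbb N\Delta$ with $E<_\Sigma G<_\Sigma F$; then $F-E$ is called a covering difference in $\mathbb N\Delta$. For $E=\sum_D k_DD\in\mathbb Z\Delta$, $E^+=\sum_{k_D>0}k_DD$, $E^-=E^+-E$, and $\mathrm{ht}(E)=\sum_D k_D$. For $\gamma=\sum a_i\sigma_i\in\mathbb N\Sigma$ (the $\sigma_i$ are linearly independent), $\mathrm{supp}_\Sigma\gamma=\{\sigma_i:a_i>0\}$. *)

theory Defs
  imports Main "HOL-Library.Function_Algebras"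
begin

text \<open>The free abelian group on Delta = {D_1,...,D_6}: integer-valued functions on nat
  supported in {1..6}; the basis element D_i is the indicator of i.\<close>

definition Delta :: "nat set" where "Delta = {1..6}"

definition ZDelta :: "(nat \<Rightarrow> int) set" where
  "ZDelta = {E. \<forall>d. d \<notin> Delta \<longrightarrow> E d = 0}"

definition NDelta :: "(nat \<Rightarrow> int) set" where
  "NDelta = {E \<in> ZDelta. \<forall>d. 0 \<le> E d}"

definition Dbas :: "nat \<Rightarrow> nat \<Rightarrow> int" where
  "Dbas i = (\<lambda>d. if d = i then 1 else 0)"

definition sigma :: "nat \<Rightarrow> nat \<Rightarrow> int" where
  "sigma i =
    (if i = 1 then Dbas 1 + Dbas 2 - Dbas 3
     else if i = 2 then - Dbas 1 + Dbas 2 + Dbas 3 - Dbas 4 - Dbas 6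
     else if i = 3 then - Dbas 2 + Dbas 3 + Dbas 4 - Dbas 5
     else if i = 4 then - Dbas 3 + Dbas 4 + Dbas 5
     else if i = 5 then - Dbas 5 + Dbas 6
     else 0)"

definition comb :: "(nat \<Rightarrow> nat) \<Rightarrow> nat \<Rightarrow> int" where
  "comb a = (\<lambda>d. \<Sum>i\<in>{1..5}. int (a i) * sigma i d)"

definition NSigma :: "(nat \<Rightarrow> int) set" where
  "NSigma = {comb a | a. True}"

definition leS :: "(nat \<Rightarrow> int) \<Rightarrow> (nat \<Rightarrow> int) \<Rightarrow> bool" where
  "leS D E \<longleftrightarrow> E - D \<in> NSigma"

definition lessS :: "(nat \<Rightarrow> int) \<Rightarrow> (nat \<Rightarrow> int) \<Rightarrow> bool" where
  "lessS D E \<longleftrightarrow> leS D E \<and> D \<noteq> E"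

definition covers :: "(nat \<Rightarrow> int) \<Rightarrow> (nat \<Rightarrow> int) \<Rightarrow> bool" where
  "covers F E \<longleftrightarrow> E \<in> NDelta \<and> F \<in> NDelta \<and> lessS E F \<and>
     \<not> (\<exists>G \<in> NDelta. lessS E G \<and> lessS G F)"

definition covering_difference :: "(nat \<Rightarrow> int) \<Rightarrow> bool" where
  "covering_difference \<gamma> \<longleftrightarrow> (\<exists>E F. covers F E \<and> \<gamma> = F - E)"

text \<open>Sigma-support of gamma in N Sigma (sigma's are linearly independent, so
  the coefficients are unique).\<close>
definition suppS :: "(nat \<Rightarrow> int) \<Rightarrow> (nat \<Rightarrow> int) set" where
  "suppS \<gamma> = {sigma i | i. i \<in> {1..5} \<and> (\<exists>a. \<gamma> = comb a \<and> 0 < a i)}"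

definition posp :: "(nat \<Rightarrow> int) \<Rightarrow> nat \<Rightarrow> int" where
  "posp E = (\<lambda>d. if 0 < E d then E d else 0)"

definition ht :: "(nat \<Rightarrow> int) \<Rightarrow> int" where
  "ht E = (\<Sum>d\<in>Delta. E d)"

end

theory Submission
  imports Defs
begin

lemma sum5: "{1..5::nat} = {1,2,3,4,5}" by auto
lemma sum5S: "{Suc 0..5} = {1,2,3,4,5}" by auto
lemma set6: "{1..6::nat} = {1,2,3,4,5,6}" by auto

lemma comb_val: "comb a d = (if d = 1 then int (a 1) - int (a 2)
  else if d = 2 then int (a 1) + int (a 2) - int (a 3)
  else if d = 3 then - int (a 1) + int (a 2) + int (a 3) - int (a 4)
  else if d = 4 then - int (a 2) + int (a 3) + int (a 4)
  else if d = 5 then - int (a 3) + int (a 4) - int (a 5)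
  else if d = 6 then - int (a 2) + int (a 5) else 0)"
  unfolding comb_def sigma_def Dbas_def sum5 by simp

lemma comb_inj:
  assumes "comb a = comb b" shows "\<forall>i\<in>{1..5}. a i = b i"
proof -
  have "\<And>d. comb a d = comb b d" using assms by simp
  from this[of 1] this[of 2] this[of 3] this[of 4] this[of 5] this[of 6]
  show ?thesis unfolding sum5 by (simp add: comb_val)
qed

lemma comb_zero: "(\<forall>d. comb a d = 0) \<Longrightarrow> \<forall>i\<in>{1..5}. a i = 0"
proof -
  assume h: "\<forall>d. comb a d = 0"
  from h[rule_format, of 1] h[rule_format, of 2] h[rule_format, of 3] h[rule_format, of 4]
    h[rule_format, of 5] h[rule_format, of 6]
  show ?thesis unfolding sum5 by (simp add: comb_val)
qed

lemma key:
  assumes cov: "covers F E" and eq: "F - E = comb a"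
    and le: "\<forall>i\<in>{1..5}. b i \<le> a i"
    and nz: "\<not> (\<forall>i\<in>{1..5}. b i = 0)" and na: "\<not> (\<forall>i\<in>{1..5}. b i = a i)"
  shows "\<exists>d\<in>{1..6}. E d + comb b d < 0"
proof (rule ccontr)
  assume c: "\<not> ?thesis"
  define G where "G = E + comb b"
  have EN: "E \<in> NDelta" and FN: "F \<in> NDelta" and ng: "\<not> (\<exists>G \<in> NDelta. lessS E G \<and> lessS G F)"
    using cov unfolding covers_def by auto
  have GN: "G \<in> NDelta"
  proof -
    have "\<forall>d. d \<notin> Delta \<longrightarrow> G d = 0"
      using EN unfolding G_def NDelta_def ZDelta_def Delta_def by (auto simp: comb_val)
    moreover have "\<forall>d. 0 \<le> G d"
    proof
      fix d show "0 \<le> G d"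
      proof (cases "d \<in> {1..6}")
        case True then show ?thesis using c unfolding G_def by force
      next
        case False then show ?thesis using EN unfolding G_def NDelta_def ZDelta_def Delta_def
          by (auto simp: comb_val)
      qed
    qed
    ultimately show ?thesis unfolding NDelta_def ZDelta_def by auto
  qed
  have l1: "lessS E G"
  proof -
    have "G - E = comb b" unfolding G_def by simp
    moreover have "E \<noteq> G"
    proof
      assume "E = G"
      hence "\<forall>d. comb b d = 0" unfolding G_def by (metis add_cancel_left_right fun_eq_iff plus_fun_def)
      thus False using comb_zero nz by blast
    qed
    ultimately show ?thesis unfolding lessS_def leS_def NSigma_def by auto
  qed
  have l2: "lessS G F"
  proof -
    have "F - G = comb (\<lambda>i. a i - b i)"
    proof
      fix d
      have "F d - G d = comb a d - comb b d" unfolding G_def using fun_cong[OF eq, of d] by simp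
      also have "\<dots> = comb (\<lambda>i. a i - b i) d" using le unfolding sum5 by (simp add: comb_val of_nat_diff)
      finally show "(F - G) d = comb (\<lambda>i. a i - b i) d" by simp
    qed
    moreover have "G \<noteq> F"
    proof
      assume "G = F"
      hence "comb a = comb b" using eq unfolding G_def by auto
      thus False using comb_inj na by metis
    qed
    ultimately show ?thesis unfolding lessS_def leS_def NSigma_def by auto
  qed
  show False using ng GN l1 l2 by blast
qed

lemma arith_core:
  fixes a1 a2 a3 a4 a5 e1 e2 e3 e4 e5 e6 :: int
  assumes "a1 \<ge> 0"
    and "a2 \<ge> 0"
    and "a3 \<ge> 0"
    and "a4 \<ge> 0"
    and "a5 \<ge> 0"
    and "e1 \<ge> 0"
    and "e2 \<ge> 0"
    and "e3 \<ge> 0"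
    and "e4 \<ge> 0"
    and "e5 \<ge> 0"
    and "e6 \<ge> 0"
    and "e1 + (0 + a1 - a2) \<ge> 0"
    and "e2 + (0 + a1 + a2 - a3) \<ge> 0"
    and "e3 + (0 - a1 + a2 + a3 - a4) \<ge> 0"
    and "e4 + (0 - a2 + a3 + a4) \<ge> 0"
    and "e5 + (0 - a3 + a4 - a5) \<ge> 0"
    and "e6 + (0 - a2 + a5) \<ge> 0"
    and "\<not>(a1=0 \<and> a2=0 \<and> a3=0 \<and> a4=0 \<and> a5=0)"
    and "(a5 \<ge> 1) \<longrightarrow> (a1 = 0 \<and> a2 = 0 \<and> a3 = 0 \<and> a4 = 0 \<and> a5 = 1) \<or> e5 + (-1) < 0"
    and "(a4 \<ge> 1) \<longrightarrow> (a1 = 0 \<and> a2 = 0 \<and> a3 = 0 \<and> a4 = 1 \<and> a5 = 0) \<or> e3 + (-1) < 0"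
    and "(a2 \<ge> 1 \<and> a4 \<ge> 1) \<longrightarrow> (a1 = 0 \<and> a2 = 1 \<and> a3 = 0 \<and> a4 = 1 \<and> a5 = 0) \<or> e1 + (-1) < 0 \<or> e6 + (-1) < 0"
    and "(a1 \<ge> 1 \<and> a3 \<ge> 1) \<longrightarrow> (a1 = 1 \<and> a2 = 0 \<and> a3 = 1 \<and> a4 = 0 \<and> a5 = 0) \<or> e5 + (-1) < 0"
    and "(a3 \<ge> 1 \<and> a4 \<ge> 1) \<longrightarrow> (a1 = 0 \<and> a2 = 0 \<and> a3 = 1 \<and> a4 = 1 \<and> a5 = 0) \<or> e4 + (0 - a2 + a3 + a4) - (2) < 0"
    and "(a1 \<ge> 1 \<and> a2 \<ge> 1) \<longrightarrow> (a1 = 1 \<and> a2 = 1 \<and> a3 = 0 \<and> a4 = 0 \<and> a5 = 0) \<or> e2 + (0 + a1 + a2 - a3) - (2) < 0"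
    and "(a2 \<ge> 1 \<and> a3 \<ge> 1) \<longrightarrow> (a1 = 0 \<and> a2 = 1 \<and> a3 = 1 \<and> a4 = 0 \<and> a5 = 0) \<or> e1 + (-1) < 0 \<or> e5 + (-1) < 0 \<or> e6 + (-1) < 0"
    and "(a3 \<ge> 1) \<longrightarrow> (a1 = 0 \<and> a2 = 0 \<and> a3 = 1 \<and> a4 = 0 \<and> a5 = 0) \<or> e2 + (-1) < 0 \<or> e5 + (-1) < 0"
    and "(a2 \<ge> 1) \<longrightarrow> (a1 = 0 \<and> a2 = 1 \<and> a3 = 0 \<and> a4 = 0 \<and> a5 = 0) \<or> e1 + (-1) < 0 \<or> e4 + (-1) < 0 \<or> e6 + (-1) < 0"
    and "(a2 \<ge> 1 \<and> a4 \<ge> 1 \<and> a5 \<ge> 1) \<longrightarrow> (a1 = 0 \<and> a2 = 1 \<and> a3 = 0 \<and> a4 = 1 \<and> a5 = 1) \<or> e1 + (-1) < 0"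
    and "(a1 \<ge> 1) \<longrightarrow> (a1 = 1 \<and> a2 = 0 \<and> a3 = 0 \<and> a4 = 0 \<and> a5 = 0) \<or> e3 + (-1) < 0"
  shows "(a1 = 0 \<and> a2 = 0 \<and> a3 = 0 \<and> a4 = 0 \<and> a5 = 1) \<or> (a1 = 0 \<and> a2 = 0 \<and> a3 = 0 \<and> a4 = 1 \<and> a5 = 0) \<or> (a1 = 0 \<and> a2 = 0 \<and> a3 = 1 \<and> a4 = 0 \<and> a5 = 0) \<or> (a1 = 0 \<and> a2 = 0 \<and> a3 = 1 \<and> a4 = 1 \<and> a5 = 0) \<or> (a1 = 0 \<and> a2 = 1 \<and> a3 = 0 \<and> a4 = 0 \<and> a5 = 0) \<or> (a1 = 0 \<and> a2 = 1 \<and> a3 = 0 \<and> a4 = 1 \<and> a5 = 0) \<or> (a1 = 0 \<and> a2 = 1 \<and> a3 = 0 \<and> a4 = 1 \<and> a5 = 1) \<or> (a1 = 0 \<and> a2 = 1 \<and> a3 = 1 \<and> a4 = 0 \<and> a5 = 0) \<or> (a1 = 1 \<and> a2 = 0 \<and> a3 = 0 \<and> a4 = 0 \<and> a5 = 0) \<or> (a1 = 1 \<and> a2 = 0 \<and> a3 = 1 \<and> a4 = 0 \<and> a5 = 0) \<or> (a1 = 1 \<and> a2 = 1 \<and> a3 = 0 \<and> a4 = 0 \<and> a5 = 0) \<or> (a1 = 1 \<and> a2 = 1 \<and> a3 = 1 \<and> a4 = 1 \<and> a5 = 0)"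
  using assms by smt


definition good :: "(nat \<Rightarrow> nat) \<Rightarrow> bool" where
  "good a \<longleftrightarrow> (int (a 1) = 0 \<and> int (a 2) = 0 \<and> int (a 3) = 0 \<and> int (a 4) = 0 \<and> int (a 5) = 1) \<or> (int (a 1) = 0 \<and> int (a 2) = 0 \<and> int (a 3) = 0 \<and> int (a 4) = 1 \<and> int (a 5) = 0) \<or> (int (a 1) = 0 \<and> int (a 2) = 0 \<and> int (a 3) = 1 \<and> int (a 4) = 0 \<and> int (a 5) = 0) \<or> (int (a 1) = 0 \<and> int (a 2) = 0 \<and> int (a 3) = 1 \<and> int (a 4) = 1 \<and> int (a 5) = 0) \<or> (int (a 1) = 0 \<and> int (a 2) = 1 \<and> int (a 3) = 0 \<and> int (a 4) = 0 \<and> int (a 5) = 0) \<or> (int (a 1) = 0 \<and> int (a 2) = 1 \<and> int (a 3) = 0 \<and> int (a 4) = 1 \<and> int (a 5) = 0) \<or> (int (a 1) = 0 \<and> int (a 2) = 1 \<and> int (a 3) = 0 \<and> int (a 4) = 1 \<and> int (a 5) = 1) \<or> (int (a 1) = 0 \<and> int (a 2) = 1 \<and> int (a 3) = 1 \<and> int (a 4) = 0 \<and> int (a 5) = 0) \<or> (int (a 1) = 1 \<and> int (a 2) = 0 \<and> int (a 3) = 0 \<and> int (a 4) = 0 \<and> int (a 5) = 0) \<or> (int (a 1) = 1 \<and> int (a 2) = 0 \<and> int (a 3) = 1 \<and> int (a 4) = 0 \<and> int (a 5) = 0) \<or> (int (a 1) = 1 \<and> int (a 2) = 1 \<and> int (a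 3) = 0 \<and> int (a 4) = 0 \<and> int (a 5) = 0) \<or> (int (a 1) = 1 \<and> int (a 2) = 1 \<and> int (a 3) = 1 \<and> int (a 4) = 1 \<and> int (a 5) = 0)"

lemma cand:
  assumes cov: "covers F E" and eq: "F - E = comb a"
  shows "good a"
proof -
  have EN: "E \<in> NDelta" and FN: "F \<in> NDelta" and ne: "E \<noteq> F"
    using cov unfolding covers_def lessS_def by auto
  have f: "\<And>d. F d = E d + comb a d" using fun_cong[OF eq] by (simp add: algebra_simps)
  have hE: "E 1 \<ge> 0" "E 2 \<ge> 0" "E 3 \<ge> 0" "E 4 \<ge> 0" "E 5 \<ge> 0" "E 6 \<ge> 0" using EN unfolding NDelta_def by auto
  have hEn: "\<And>d. \<not> E d < 0" and hEp: "\<And>d. 0 \<le> E d" using EN unfolding NDelta_def by (auto simp: not_less)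
  have F0: "\<And>d. 0 \<le> E d + comb a d" using FN f unfolding NDelta_def by (metis (mono_tags, lifting) mem_Collect_eq)
  have hF: "E 1 + (0 + int (a 1) - int (a 2)) \<ge> 0" "E 2 + (0 + int (a 1) + int (a 2) - int (a 3)) \<ge> 0" "E 3 + (0 - int (a 1) + int (a 2) + int (a 3) - int (a 4)) \<ge> 0" "E 4 + (0 - int (a 2) + int (a 3) + int (a 4)) \<ge> 0" "E 5 + (0 - int (a 3) + int (a 4) - int (a 5)) \<ge> 0" "E 6 + (0 - int (a 2) + int (a 5)) \<ge> 0" using F0[of 1] F0[of 2] F0[of 3] F0[of 4] F0[of 5] F0[of 6] by (simp_all add: comb_val)
  have nz: "\<not>(int (a 1)=0 \<and> int (a 2)=0 \<and> int (a 3)=0 \<and> int (a 4)=0 \<and> int (a 5)=0)"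
  proof
    assume z: "int (a 1)=0 \<and> int (a 2)=0 \<and> int (a 3)=0 \<and> int (a 4)=0 \<and> int (a 5)=0"
    have "F = E" proof fix d show "F d = E d" using z f[of d] by (simp add: comb_val) qed
    thus False using ne by simp
  qed
  have t0: "(int (a 5) \<ge> 1) \<longrightarrow> (int (a 1) = 0 \<and> int (a 2) = 0 \<and> int (a 3) = 0 \<and> int (a 4) = 0 \<and> int (a 5) = 1) \<or> E 5 + (-1) < 0"
  proof (intro impI)
    assume h: "int (a 5) \<ge> 1"
    show "(int (a 1) = 0 \<and> int (a 2) = 0 \<and> int (a 3) = 0 \<and> int (a 4) = 0 \<and> int (a 5) = 1) \<or> E 5 + (-1) < 0"
    proof (cases "int (a 1) = 0 \<and> int (a 2) = 0 \<and> int (a 3) = 0 \<and> int (a 4) = 0 \<and> int (a 5) = 1")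
      case True then show ?thesis by blast
    next
      case False
      have "\<exists>d\<in>{1..6}. E d + comb (\<lambda>i. if i \<in> {5} then 1 else 0) d < 0"
        by (rule key[OF cov eq]) (use h False in \<open>auto simp: sum5 sum5S\<close>)
      then show ?thesis using hEp[of 1] hEp[of 2] hEp[of 3] hEp[of 4] hEp[of 5] hEp[of 6] F0[of 1] F0[of 2] F0[of 3] F0[of 4] F0[of 5] F0[of 6] h unfolding set6 by (auto simp: comb_val of_nat_diff)
    qed
  qed
  have t1: "(int (a 4) \<ge> 1) \<longrightarrow> (int (a 1) = 0 \<and> int (a 2) = 0 \<and> int (a 3) = 0 \<and> int (a 4) = 1 \<and> int (a 5) = 0) \<or> E 3 + (-1) < 0"
  proof (intro impI)
    assume h: "int (a 4) \<ge> 1"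
    show "(int (a 1) = 0 \<and> int (a 2) = 0 \<and> int (a 3) = 0 \<and> int (a 4) = 1 \<and> int (a 5) = 0) \<or> E 3 + (-1) < 0"
    proof (cases "int (a 1) = 0 \<and> int (a 2) = 0 \<and> int (a 3) = 0 \<and> int (a 4) = 1 \<and> int (a 5) = 0")
      case True then show ?thesis by blast
    next
      case False
      have "\<exists>d\<in>{1..6}. E d + comb (\<lambda>i. if i \<in> {4} then 1 else 0) d < 0"
        by (rule key[OF cov eq]) (use h False in \<open>auto simp: sum5 sum5S\<close>)
      then show ?thesis using hEp[of 1] hEp[of 2] hEp[of 3] hEp[of 4] hEp[of 5] hEp[of 6] F0[of 1] F0[of 2] F0[of 3] F0[of 4] F0[of 5] F0[of 6] h unfolding set6 by (auto simp: comb_val of_nat_diff)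
    qed
  qed
  have t2: "(int (a 2) \<ge> 1 \<and> int (a 4) \<ge> 1) \<longrightarrow> (int (a 1) = 0 \<and> int (a 2) = 1 \<and> int (a 3) = 0 \<and> int (a 4) = 1 \<and> int (a 5) = 0) \<or> E 1 + (-1) < 0 \<or> E 6 + (-1) < 0"
  proof (intro impI)
    assume h: "int (a 2) \<ge> 1 \<and> int (a 4) \<ge> 1"
    show "(int (a 1) = 0 \<and> int (a 2) = 1 \<and> int (a 3) = 0 \<and> int (a 4) = 1 \<and> int (a 5) = 0) \<or> E 1 + (-1) < 0 \<or> E 6 + (-1) < 0"
    proof (cases "int (a 1) = 0 \<and> int (a 2) = 1 \<and> int (a 3) = 0 \<and> int (a 4) = 1 \<and> int (a 5) = 0")
      case True then show ?thesis by blast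
    next
      case False
      have "\<exists>d\<in>{1..6}. E d + comb (\<lambda>i. if i \<in> {2,4} then 1 else 0) d < 0"
        by (rule key[OF cov eq]) (use h False in \<open>auto simp: sum5 sum5S\<close>)
      then show ?thesis using hEp[of 1] hEp[of 2] hEp[of 3] hEp[of 4] hEp[of 5] hEp[of 6] F0[of 1] F0[of 2] F0[of 3] F0[of 4] F0[of 5] F0[of 6] h unfolding set6 by (auto simp: comb_val of_nat_diff)
    qed
  qed
  have t3: "(int (a 1) \<ge> 1 \<and> int (a 3) \<ge> 1) \<longrightarrow> (int (a 1) = 1 \<and> int (a 2) = 0 \<and> int (a 3) = 1 \<and> int (a 4) = 0 \<and> int (a 5) = 0) \<or> E 5 + (-1) < 0"
  proof (intro impI)
    assume h: "int (a 1) \<ge> 1 \<and> int (a 3) \<ge> 1"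
    show "(int (a 1) = 1 \<and> int (a 2) = 0 \<and> int (a 3) = 1 \<and> int (a 4) = 0 \<and> int (a 5) = 0) \<or> E 5 + (-1) < 0"
    proof (cases "int (a 1) = 1 \<and> int (a 2) = 0 \<and> int (a 3) = 1 \<and> int (a 4) = 0 \<and> int (a 5) = 0")
      case True then show ?thesis by blast
    next
      case False
      have "\<exists>d\<in>{1..6}. E d + comb (\<lambda>i. if i \<in> {1,3} then 1 else 0) d < 0"
        by (rule key[OF cov eq]) (use h False in \<open>auto simp: sum5 sum5S\<close>)
      then show ?thesis using hEp[of 1] hEp[of 2] hEp[of 3] hEp[of 4] hEp[of 5] hEp[of 6] F0[of 1] F0[of 2] F0[of 3] F0[of 4] F0[of 5] F0[of 6] h unfolding set6 by (auto simp: comb_val of_nat_diff)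
    qed
  qed
  have t4: "(int (a 3) \<ge> 1 \<and> int (a 4) \<ge> 1) \<longrightarrow> (int (a 1) = 0 \<and> int (a 2) = 0 \<and> int (a 3) = 1 \<and> int (a 4) = 1 \<and> int (a 5) = 0) \<or> E 4 + (0 - int (a 2) + int (a 3) + int (a 4)) - (2) < 0"
  proof (intro impI)
    assume h: "int (a 3) \<ge> 1 \<and> int (a 4) \<ge> 1"
    show "(int (a 1) = 0 \<and> int (a 2) = 0 \<and> int (a 3) = 1 \<and> int (a 4) = 1 \<and> int (a 5) = 0) \<or> E 4 + (0 - int (a 2) + int (a 3) + int (a 4)) - (2) < 0"
    proof (cases "int (a 1) = 0 \<and> int (a 2) = 0 \<and> int (a 3) = 1 \<and> int (a 4) = 1 \<and> int (a 5) = 0")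
      case True then show ?thesis by blast
    next
      case False
      have "\<exists>d\<in>{1..6}. E d + comb (\<lambda>i. a i - (if i \<in> {3,4} then 1 else 0)) d < 0"
        by (rule key[OF cov eq]) (use h False in \<open>auto simp: sum5 sum5S\<close>)
      then show ?thesis using hEp[of 1] hEp[of 2] hEp[of 3] hEp[of 4] hEp[of 5] hEp[of 6] F0[of 1] F0[of 2] F0[of 3] F0[of 4] F0[of 5] F0[of 6] h unfolding set6 by (auto simp: comb_val of_nat_diff)
    qed
  qed
  have t5: "(int (a 1) \<ge> 1 \<and> int (a 2) \<ge> 1) \<longrightarrow> (int (a 1) = 1 \<and> int (a 2) = 1 \<and> int (a 3) = 0 \<and> int (a 4) = 0 \<and> int (a 5) = 0) \<or> E 2 + (0 + int (a 1) + int (a 2) - int (a 3)) - (2) < 0"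
  proof (intro impI)
    assume h: "int (a 1) \<ge> 1 \<and> int (a 2) \<ge> 1"
    show "(int (a 1) = 1 \<and> int (a 2) = 1 \<and> int (a 3) = 0 \<and> int (a 4) = 0 \<and> int (a 5) = 0) \<or> E 2 + (0 + int (a 1) + int (a 2) - int (a 3)) - (2) < 0"
    proof (cases "int (a 1) = 1 \<and> int (a 2) = 1 \<and> int (a 3) = 0 \<and> int (a 4) = 0 \<and> int (a 5) = 0")
      case True then show ?thesis by blast
    next
      case False
      have "\<exists>d\<in>{1..6}. E d + comb (\<lambda>i. a i - (if i \<in> {1,2} then 1 else 0)) d < 0"
        by (rule key[OF cov eq]) (use h False in \<open>auto simp: sum5 sum5S\<close>)
      then show ?thesis using hEp[of 1] hEp[of 2] hEp[of 3] hEp[of 4] hEp[of 5] hEp[of 6] F0[of 1] F0[of 2] F0[of 3] F0[of 4] F0[of 5] F0[of 6] h unfolding set6 by (auto simp: comb_val of_nat_diff)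
    qed
  qed
  have t6: "(int (a 2) \<ge> 1 \<and> int (a 3) \<ge> 1) \<longrightarrow> (int (a 1) = 0 \<and> int (a 2) = 1 \<and> int (a 3) = 1 \<and> int (a 4) = 0 \<and> int (a 5) = 0) \<or> E 1 + (-1) < 0 \<or> E 5 + (-1) < 0 \<or> E 6 + (-1) < 0"
  proof (intro impI)
    assume h: "int (a 2) \<ge> 1 \<and> int (a 3) \<ge> 1"
    show "(int (a 1) = 0 \<and> int (a 2) = 1 \<and> int (a 3) = 1 \<and> int (a 4) = 0 \<and> int (a 5) = 0) \<or> E 1 + (-1) < 0 \<or> E 5 + (-1) < 0 \<or> E 6 + (-1) < 0"
    proof (cases "int (a 1) = 0 \<and> int (a 2) = 1 \<and> int (a 3) = 1 \<and> int (a 4) = 0 \<and> int (a 5) = 0")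
      case True then show ?thesis by blast
    next
      case False
      have "\<exists>d\<in>{1..6}. E d + comb (\<lambda>i. if i \<in> {2,3} then 1 else 0) d < 0"
        by (rule key[OF cov eq]) (use h False in \<open>auto simp: sum5 sum5S\<close>)
      then show ?thesis using hEp[of 1] hEp[of 2] hEp[of 3] hEp[of 4] hEp[of 5] hEp[of 6] F0[of 1] F0[of 2] F0[of 3] F0[of 4] F0[of 5] F0[of 6] h unfolding set6 by (auto simp: comb_val of_nat_diff)
    qed
  qed
  have t7: "(int (a 3) \<ge> 1) \<longrightarrow> (int (a 1) = 0 \<and> int (a 2) = 0 \<and> int (a 3) = 1 \<and> int (a 4) = 0 \<and> int (a 5) = 0) \<or> E 2 + (-1) < 0 \<or> E 5 + (-1) < 0"
  proof (intro impI)
    assume h: "int (a 3) \<ge> 1"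
    show "(int (a 1) = 0 \<and> int (a 2) = 0 \<and> int (a 3) = 1 \<and> int (a 4) = 0 \<and> int (a 5) = 0) \<or> E 2 + (-1) < 0 \<or> E 5 + (-1) < 0"
    proof (cases "int (a 1) = 0 \<and> int (a 2) = 0 \<and> int (a 3) = 1 \<and> int (a 4) = 0 \<and> int (a 5) = 0")
      case True then show ?thesis by blast
    next
      case False
      have "\<exists>d\<in>{1..6}. E d + comb (\<lambda>i. if i \<in> {3} then 1 else 0) d < 0"
        by (rule key[OF cov eq]) (use h False in \<open>auto simp: sum5 sum5S\<close>)
      then show ?thesis using hEp[of 1] hEp[of 2] hEp[of 3] hEp[of 4] hEp[of 5] hEp[of 6] F0[of 1] F0[of 2] F0[of 3] F0[of 4] F0[of 5] F0[of 6] h unfolding set6 by (auto simp: comb_val of_nat_diff)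
    qed
  qed
  have t8: "(int (a 2) \<ge> 1) \<longrightarrow> (int (a 1) = 0 \<and> int (a 2) = 1 \<and> int (a 3) = 0 \<and> int (a 4) = 0 \<and> int (a 5) = 0) \<or> E 1 + (-1) < 0 \<or> E 4 + (-1) < 0 \<or> E 6 + (-1) < 0"
  proof (intro impI)
    assume h: "int (a 2) \<ge> 1"
    show "(int (a 1) = 0 \<and> int (a 2) = 1 \<and> int (a 3) = 0 \<and> int (a 4) = 0 \<and> int (a 5) = 0) \<or> E 1 + (-1) < 0 \<or> E 4 + (-1) < 0 \<or> E 6 + (-1) < 0"
    proof (cases "int (a 1) = 0 \<and> int (a 2) = 1 \<and> int (a 3) = 0 \<and> int (a 4) = 0 \<and> int (a 5) = 0")
      case True then show ?thesis by blast
    next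
      case False
      have "\<exists>d\<in>{1..6}. E d + comb (\<lambda>i. if i \<in> {2} then 1 else 0) d < 0"
        by (rule key[OF cov eq]) (use h False in \<open>auto simp: sum5 sum5S\<close>)
      then show ?thesis using hEp[of 1] hEp[of 2] hEp[of 3] hEp[of 4] hEp[of 5] hEp[of 6] F0[of 1] F0[of 2] F0[of 3] F0[of 4] F0[of 5] F0[of 6] h unfolding set6 by (auto simp: comb_val of_nat_diff)
    qed
  qed
  have t9: "(int (a 2) \<ge> 1 \<and> int (a 4) \<ge> 1 \<and> int (a 5) \<ge> 1) \<longrightarrow> (int (a 1) = 0 \<and> int (a 2) = 1 \<and> int (a 3) = 0 \<and> int (a 4) = 1 \<and> int (a 5) = 1) \<or> E 1 + (-1) < 0"
  proof (intro impI)
    assume h: "int (a 2) \<ge> 1 \<and> int (a 4) \<ge> 1 \<and> int (a 5) \<ge> 1"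
    show "(int (a 1) = 0 \<and> int (a 2) = 1 \<and> int (a 3) = 0 \<and> int (a 4) = 1 \<and> int (a 5) = 1) \<or> E 1 + (-1) < 0"
    proof (cases "int (a 1) = 0 \<and> int (a 2) = 1 \<and> int (a 3) = 0 \<and> int (a 4) = 1 \<and> int (a 5) = 1")
      case True then show ?thesis by blast
    next
      case False
      have "\<exists>d\<in>{1..6}. E d + comb (\<lambda>i. if i \<in> {2,4,5} then 1 else 0) d < 0"
        by (rule key[OF cov eq]) (use h False in \<open>auto simp: sum5 sum5S\<close>)
      then show ?thesis using hEp[of 1] hEp[of 2] hEp[of 3] hEp[of 4] hEp[of 5] hEp[of 6] F0[of 1] F0[of 2] F0[of 3] F0[of 4] F0[of 5] F0[of 6] h unfolding set6 by (auto simp: comb_val of_nat_diff)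
    qed
  qed
  have t10: "(int (a 1) \<ge> 1) \<longrightarrow> (int (a 1) = 1 \<and> int (a 2) = 0 \<and> int (a 3) = 0 \<and> int (a 4) = 0 \<and> int (a 5) = 0) \<or> E 3 + (-1) < 0"
  proof (intro impI)
    assume h: "int (a 1) \<ge> 1"
    show "(int (a 1) = 1 \<and> int (a 2) = 0 \<and> int (a 3) = 0 \<and> int (a 4) = 0 \<and> int (a 5) = 0) \<or> E 3 + (-1) < 0"
    proof (cases "int (a 1) = 1 \<and> int (a 2) = 0 \<and> int (a 3) = 0 \<and> int (a 4) = 0 \<and> int (a 5) = 0")
      case True then show ?thesis by blast
    next
      case False
      have "\<exists>d\<in>{1..6}. E d + comb (\<lambda>i. if i \<in> {1} then 1 else 0) d < 0"
        by (rule key[OF cov eq]) (use h False in \<open>auto simp: sum5 sum5S\<close>)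
      then show ?thesis using hEp[of 1] hEp[of 2] hEp[of 3] hEp[of 4] hEp[of 5] hEp[of 6] F0[of 1] F0[of 2] F0[of 3] F0[of 4] F0[of 5] F0[of 6] h unfolding set6 by (auto simp: comb_val of_nat_diff)
    qed
  qed
  note ts = t0 t1 t2 t3 t4 t5 t6 t7 t8 t9 t10

  show ?thesis unfolding good_def by (rule arith_core[OF _ _ _ _ _ hE hF nz ts]) simp_all
qed

lemma cand2: "covering_difference \<gamma> \<Longrightarrow> \<exists>a. \<gamma> = comb a \<and> good a"
proof -
  assume "covering_difference \<gamma>"
  then obtain E F where cov: "covers F E" and g: "\<gamma> = F - E" unfolding covering_difference_def by auto
  then obtain a where eq: "F - E = comb a" unfolding covers_def lessS_def leS_def NSigma_def by auto
  show ?thesis using cand[OF cov eq] eq g by auto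
qed

lemma eq5: "int (a 1)=0 \<and> int (a 2)=0 \<and> int (a 3)=0 \<and> int (a 4)=0 \<and> int (a 5)=1 \<Longrightarrow> comb a = sigma 5"
  by (auto simp: fun_eq_iff comb_val sigma_def Dbas_def)

lemma eq245: "int (a 1)=0 \<and> int (a 2)=1 \<and> int (a 3)=0 \<and> int (a 4)=1 \<and> int (a 5)=1 \<Longrightarrow> comb a = sigma 2 + sigma 4 + sigma 5"
  by (auto simp: fun_eq_iff comb_val sigma_def Dbas_def)

lemma htgood: "good a \<Longrightarrow> comb a \<noteq> sigma 5 \<Longrightarrow> comb a \<noteq> sigma 2 + sigma 4 + sigma 5 \<Longrightarrow> ht (posp (comb a)) = 2"
  unfolding good_def ht_def posp_def Delta_def set6
  using eq5[of a] eq245[of a] by (auto simp: comb_val)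

lemma sig6: "i \<in> {1..5} \<Longrightarrow> sigma i 6 = 1 \<Longrightarrow> i = 5"
  unfolding sum5 by (auto simp: sigma_def Dbas_def)

theorem lemma2p7:
  shows "(\<forall>\<gamma>. \<gamma> \<in> NSigma \<and> covering_difference \<gamma> \<and> sigma 5 \<in> suppS \<gamma> \<longrightarrow>
            (\<gamma> = sigma 5 \<and> sigma 5 = - Dbas 5 + Dbas 6) \<or>
            (\<gamma> = sigma 2 + sigma 4 + sigma 5 \<and> sigma 2 + sigma 4 + sigma 5 = - Dbas 1 + Dbas 2))
       \<and> (\<forall>\<gamma>. \<gamma> \<in> NSigma \<and> covering_difference \<gamma> \<and> \<gamma> \<noteq> sigma 5 \<and>
            \<gamma> \<noteq> sigma 2 + sigma 4 + sigma 5 \<longrightarrow> ht (posp \<gamma>) = 2)"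
proof (intro conjI allI impI)
  fix \<gamma> assume h: "\<gamma> \<in> NSigma \<and> covering_difference \<gamma> \<and> sigma 5 \<in> suppS \<gamma>"
  then obtain a where ga: "\<gamma> = comb a" and gd: "good a" using cand2 by blast
  from h obtain i a' where i: "i \<in> {1..5}" "sigma i = sigma 5" "\<gamma> = comb a'" "0 < a' i"
    unfolding suppS_def by auto
  have "sigma i 6 = 1" using i(2) by (simp add: sigma_def Dbas_def)
  hence "i = 5" using sig6 i(1) by blast
  moreover have "a' 5 = a 5" using comb_inj[of a' a] i(3) ga by auto
  ultimately have a5: "0 < a 5" using i(4) by simp
  have sig5: "sigma 5 = - Dbas 5 + Dbas 6" by (simp add: sigma_def)
  have s245: "sigma 2 + sigma 4 + sigma 5 = - Dbas 1 + Dbas 2" by (auto simp: sigma_def Dbas_def fun_eq_iff)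
  have "(int (a 1)=0 \<and> int (a 2)=0 \<and> int (a 3)=0 \<and> int (a 4)=0 \<and> int (a 5)=1) \<or>
        (int (a 1)=0 \<and> int (a 2)=1 \<and> int (a 3)=0 \<and> int (a 4)=1 \<and> int (a 5)=1)"
    using gd a5 unfolding good_def by auto
  then show "(\<gamma> = sigma 5 \<and> sigma 5 = - Dbas 5 + Dbas 6) \<or>
            (\<gamma> = sigma 2 + sigma 4 + sigma 5 \<and> sigma 2 + sigma 4 + sigma 5 = - Dbas 1 + Dbas 2)"
    using eq5[of a] eq245[of a] ga sig5 s245 by blast
next
  fix \<gamma> assume h: "\<gamma> \<in> NSigma \<and> covering_difference \<gamma> \<and> \<gamma> \<noteq> sigma 5 \<and>
            \<gamma> \<noteq> sigma 2 + sigma 4 + sigma 5"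
  then obtain a where ga: "\<gamma> = comb a" and gd: "good a" using cand2 by blast
  show "ht (posp \<gamma>) = 2" using htgood[OF gd] h ga by auto
qed

end
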